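(* Let $w\in\widehat W_{\mathrm{reg}}$ and $i\in\{0,\dots,l\}$, and put $\sigma=ws_i$. Then $\ker(\mathrm{id}-\tilde\sigma)$ is one-dimensional, the range $\mathrm{ran}(\mathrm{id}-\sigma)=\{x-\sigma(x)\mid x\in V\}$ is an affine hyperplane, and \[V_{w,i}=V_{\sigma,i}\subset\mathrm{ran}(\mathrm{id}-\sigma).\] Moreover $n_{w,i}$ is a normal vector to the affine hyperplane $\mathrm{ran}(\mathrm{id}-\sigma)$, and $\langle n_{w,i},\alpha_i^\vee\rangle=1$.
   Context: $V$ is a finite-dimensional real Euclidean space, $W$ an irreducible Weyl group acting on $V$ with simple roots $\alpha_1,\dots,\alpha_l$, highest root $\alpha_{\max}$, $\alpha_0:=-\alpha_{\max}$, $\alpha^\vee=2\alpha/\langle\alpha,\alpha\rangle$. Alcove $A=\{x\mid\langle\alpha_i,x\rangle+\delta_{i,0}>0,\ i=0,\dots,l\}$; $A_i$ is its face where $\langle\alpha_i,x\rangle+\delta_{i,0}=0$ and the other inequalities are strict. $\widehat W$ is generated by $s_i(x)=x-(\langle\alpha_i,x\rangle+\delta_{i,0})\alpha_i^\vee$. For $w\in\widehat W$, $\tilde w(x)=w(x)-w(0)$ is its linear part. $V_{w,i}=(\mathrm{id}-w)(A_i)$. $\widehat W_{\mathrm{reg}}=\{w\mid \mathrm{id}-\tilde w\text{ invertible}\}$, and for $w\in\widehat W_{\mathrm{reg}}$, $n_{w,i}:=(\mathrm{id}-\tilde w^{-1})^{-1}(\alpha_i)$. *)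

theory Defs
  imports "HOL-Analysis.Analysis"
begin

definition coroot :: "'a::euclidean_space \<Rightarrow> 'a" where
  "coroot a = (2 / (a \<bullet> a)) *\<^sub>R a"

definition refl :: "'a::euclidean_space \<Rightarrow> 'a \<Rightarrow> 'a" where
  "refl a x = x - (a \<bullet> x) *\<^sub>R coroot a"

definition root_system :: "'a::euclidean_space set \<Rightarrow> bool" where
  "root_system R \<longleftrightarrow> finite R \<and> 0 \<notin> R \<and> span R = UNIV
     \<and> (\<forall>a\<in>R. \<forall>b\<in>R. refl a b \<in> R)
     \<and> (\<forall>a\<in>R. \<forall>b\<in>R. b \<bullet> coroot a \<in> \<int>)
     \<and> (\<forall>a\<in>R. \<forall>c. c *\<^sub>R a \<in> R \<longrightarrow> c = 1 \<or> c = -1)"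

definition irreducible_rs :: "'a::euclidean_space set \<Rightarrow> bool" where
  "irreducible_rs R \<longleftrightarrow> \<not> (\<exists>R1 R2. R1 \<noteq> {} \<and> R2 \<noteq> {} \<and> R = R1 \<union> R2
       \<and> (\<forall>a\<in>R1. \<forall>b\<in>R2. a \<bullet> b = 0))"

definition simple_roots :: "'a::euclidean_space set \<Rightarrow> (nat \<Rightarrow> 'a) \<Rightarrow> nat \<Rightarrow> bool" where
  "simple_roots R \<alpha> l \<longleftrightarrow> \<alpha> ` {1..l} \<subseteq> R \<and> inj_on \<alpha> {1..l}
     \<and> independent (\<alpha> ` {1..l})
     \<and> (\<forall>b\<in>R. \<exists>c::nat \<Rightarrow> int.
          ((\<forall>i\<in>{1..l}. c i \<ge> 0) \<or> (\<forall>i\<in>{1..l}. c i \<le> 0))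
          \<and> b = (\<Sum>i=1..l. of_int (c i) *\<^sub>R \<alpha> i))"

definition highest_root :: "'a::euclidean_space set \<Rightarrow> (nat \<Rightarrow> 'a) \<Rightarrow> nat \<Rightarrow> 'a \<Rightarrow> bool" where
  "highest_root R \<alpha> l m \<longleftrightarrow> m \<in> R \<and>
     (\<forall>b\<in>R. \<exists>c::nat \<Rightarrow> int. (\<forall>i\<in>{1..l}. c i \<ge> 0)
          \<and> m - b = (\<Sum>i=1..l. of_int (c i) *\<^sub>R \<alpha> i))"

text \<open>Here \<open>\<alpha> 0 = - \<alpha>_max\<close>.\<close>
definition aff_s :: "(nat \<Rightarrow> 'a::euclidean_space) \<Rightarrow> nat \<Rightarrow> 'a \<Rightarrow> 'a" where
  "aff_s \<alpha> i x = x - (\<alpha> i \<bullet> x + (if i = 0 then 1 else 0)) *\<^sub>R coroot (\<alpha> i)"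

inductive_set affW :: "(nat \<Rightarrow> 'a::euclidean_space) \<Rightarrow> nat \<Rightarrow> ('a \<Rightarrow> 'a) set"
  for \<alpha> l where
  id_in: "id \<in> affW \<alpha> l"
| step: "w \<in> affW \<alpha> l \<Longrightarrow> i \<le> l \<Longrightarrow> aff_s \<alpha> i \<circ> w \<in> affW \<alpha> l"

definition lin_part :: "('a::real_vector \<Rightarrow> 'a) \<Rightarrow> 'a \<Rightarrow> 'a" where
  "lin_part w x = w x - w 0"

definition alcove_face :: "(nat \<Rightarrow> 'a::euclidean_space) \<Rightarrow> nat \<Rightarrow> nat \<Rightarrow> 'a set" where
  "alcove_face \<alpha> l i = {x. \<alpha> i \<bullet> x + (if i = 0 then 1 else 0) = 0
      \<and> (\<forall>j\<le>l. j \<noteq> i \<longrightarrow> \<alpha> j \<bullet> x + (if j = 0 then 1 else 0) > 0)}"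

definition Vwi :: "(nat \<Rightarrow> 'a::euclidean_space) \<Rightarrow> nat \<Rightarrow> ('a \<Rightarrow> 'a) \<Rightarrow> nat \<Rightarrow> 'a set" where
  "Vwi \<alpha> l w i = (\<lambda>x. x - w x) ` alcove_face \<alpha> l i"

definition regular :: "('a::euclidean_space \<Rightarrow> 'a) \<Rightarrow> bool" where
  "regular w \<longleftrightarrow> bij (\<lambda>x. x - lin_part w x)"

definition nwi :: "(nat \<Rightarrow> 'a::euclidean_space) \<Rightarrow> ('a \<Rightarrow> 'a) \<Rightarrow> nat \<Rightarrow> 'a" where
  "nwi \<alpha> w i = inv (\<lambda>x. x - inv (lin_part w) x) (\<alpha> i)"

definition affine_hyperplane :: "'a::euclidean_space set \<Rightarrow> bool" where
  "affine_hyperplane S \<longleftrightarrow> (\<exists>a b. a \<noteq> 0 \<and> S = {y. a \<bullet> y = b})"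

end

theory Submission
  imports Defs
begin

lemma refl_orth: "orthogonal_transformation (refl a)"
proof -
  have lin: "linear (refl a)"
    unfolding refl_def by (intro linear_compose_sub linear_ident) (auto intro!: linearI simp: inner_add_right algebra_simps)
  have "refl a v \<bullet> refl a u = v \<bullet> u" for v u
  proof (cases "a \<bullet> a = 0")
    case True then show ?thesis by (simp add: refl_def coroot_def)
  next
    case False
    show ?thesis using False
      by (simp add: refl_def coroot_def inner_diff_left inner_diff_right algebra_simps inner_commute power2_eq_square)
  qed
  then show ?thesis using lin by (simp add: orthogonal_transformation_def)
qed

lemma aff_s_eq: "aff_s \<alpha> i x = refl (\<alpha> i) x - (if i = 0 then 1 else 0) *\<^sub>R coroot (\<alpha> i)"
  by (simp add: aff_s_def refl_def algebra_simps)

lemma affW_struct: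
  assumes "w \<in> affW \<alpha> l"
  shows "\<exists>L. orthogonal_transformation L \<and> (\<forall>x. w x = L x + w 0)"
  using assms
proof induction
  case id_in
  then show ?case by (intro exI[of _ "\<lambda>x. x"]) auto
next
  case (step w i)
  then obtain L where L: "orthogonal_transformation L" "\<And>x. w x = L x + w 0" by blast
  have lin: "linear (refl (\<alpha> i))" using refl_orth orthogonal_transformation_linear by blast
  have "(aff_s \<alpha> i \<circ> w) x = (refl (\<alpha> i) \<circ> L) x + (aff_s \<alpha> i \<circ> w) 0" for x
    using L(2)[of x] L(2)[of 0] by (simp add: aff_s_eq linear_add[OF lin])
  then show ?case using L(1) refl_orth orthogonal_transformation_compose by blast
qed

lemma lin_inv: fixes f :: "'a::euclidean_space \<Rightarrow> 'a" assumes "linear f" "inj f" shows "linear (inv f)"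
  using assms by (simp add: inj_linear_imp_inv_linear)

lemma main_lin:
  fixes L :: "'a::euclidean_space \<Rightarrow> 'a" and a :: 'a
  assumes L: "orthogonal_transformation L" and a: "a \<noteq> 0"
    and B: "bij (\<lambda>x. x - L x)"
  defines "n \<equiv> inv (\<lambda>x. x - inv L x) a"
  shows "dim {x. x - L (refl a x) = 0} = 1"
    "range (\<lambda>x. x - L (refl a x)) = {z. n \<bullet> z = 0}"
    "n \<bullet> coroot a = 1"
proof -
  define Lt where "Lt = inv L"
  have linL: "linear L" using L orthogonal_transformation_linear by blast
  have Lt: "orthogonal_transformation Lt" using L orthogonal_transformation_inv Lt_def by blast
  have linLt: "linear Lt" using Lt orthogonal_transformation_linear by blast
  have LLt: "L (Lt x) = x" for x unfolding Lt_def by (rule surj_f_inv_f[OF orthogonal_transformation_surj[OF L]])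
  have LtL: "Lt (L x) = x" for x unfolding Lt_def by (rule inv_f_f[OF orthogonal_transformation_inj[OF L]])
  have adj: "L x \<bullet> u = x \<bullet> Lt u" for x u
  proof -
    have "L x \<bullet> L (Lt u) = x \<bullet> Lt u" using L unfolding orthogonal_transformation_def by blast
    then show ?thesis by (simp add: LLt)
  qed
  have Ltn: "Lt u \<bullet> Lt u = u \<bullet> u" for u using Lt orthogonal_transformation_def by blast
  define C where "C = (\<lambda>x. x - Lt x)"
  have linC: "linear C" unfolding C_def by (intro linear_compose_sub linear_ident linLt)
  have injC: "inj C"
  proof (rule injI)
    fix x y assume "C x = C y"
    then have "x - Lt x = y - Lt y" by (simp add: C_def)
    then have "L (x - Lt x) = L (y - Lt y)" by simp
    then have "L x - x = L y - y" by (simp add: linear_diff[OF linL] LLt)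
    then have "x - L x = y - L y" by (simp add: algebra_simps)
    then show "x = y" by (rule injD[OF bij_is_inj[OF B]])
  qed
  have surjC: "surj C" using linear_injective_imp_surjective[OF linC injC] by simp
  define Ci where "Ci = inv C"
  have CCi: "C (Ci x) = x" for x unfolding Ci_def by (rule surj_f_inv_f[OF surjC])
  have linCi: "linear Ci" unfolding Ci_def using linC injC by (rule lin_inv)
  have n_def': "n = Ci a" unfolding n_def Ci_def C_def Lt_def by simp
  define Bf where "Bf = (\<lambda>x. x - L x)"
  have linB: "linear Bf" unfolding Bf_def by (intro linear_compose_sub linear_ident linL)
  define Bi where "Bi = inv Bf"
  have Bb: "bij Bf" using B by (simp add: Bf_def)
  have BBi: "Bf (Bi x) = x" for x unfolding Bi_def by (rule surj_f_inv_f[OF bij_is_surj[OF Bb]])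
  have linBi: "linear Bi" unfolding Bi_def using linB bij_is_inj[OF Bb] by (rule lin_inv)
  have quad: "v \<bullet> Ci v = (v \<bullet> v) / 2" for v
  proof -
    define u where "u = Ci v"
    have v: "v = u - Lt u" using CCi[of v] by (simp add: C_def u_def)
    have "v \<bullet> v = 2 * (u \<bullet> u) - 2 * (u \<bullet> Lt u)"
      unfolding v using Ltn[of u] by (simp add: inner_diff_left inner_diff_right inner_commute)
    moreover have "v \<bullet> u = u \<bullet> u - u \<bullet> Lt u"
      unfolding v by (simp add: inner_diff_left inner_diff_right inner_commute)
    ultimately show ?thesis by (simp add: u_def)
  qed
  have BiCi: "u \<bullet> Bi z = Ci u \<bullet> z" for u z
  proof -
    define p where "p = Bi z"
    define q where "q = Ci u"
    have z: "z = p - L p" using BBi[of z] by (simp add: Bf_def p_def)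
    have u: "u = q - Lt q" using CCi[of u] by (simp add: C_def q_def)
    have e1: "u \<bullet> p = q \<bullet> p - Lt q \<bullet> p" unfolding u by (simp add: inner_diff_left)
    have e2: "Lt q \<bullet> p = q \<bullet> L p" using adj[of p q] by (simp add: inner_commute)
    have "u \<bullet> p = q \<bullet> (p - L p)" using e1 e2 by (simp add: inner_diff_right)
    then have "u \<bullet> p = q \<bullet> z" using z by simp
    then show ?thesis unfolding p_def q_def .
  qed
  have aa: "a \<bullet> a \<noteq> 0" using a by simp
  have c: "coroot a = (2 / (a \<bullet> a)) *\<^sub>R a" by (simp add: coroot_def)
  have nc: "n \<bullet> coroot a = 1"
    unfolding n_def' c using quad[of a] aa by (simp add: inner_commute)
  show "n \<bullet> coroot a = 1" by (fact nc)
  have ac: "a \<bullet> Ci (coroot a) = 1"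
    unfolding c using quad[of a] aa by (simp add: linear_cmul[OF linCi])
  have ac2: "a \<bullet> coroot a = 2" unfolding c using aa by simp
  have M: "x - L (refl a x) = Bf x + (a \<bullet> x) *\<^sub>R L (coroot a)" for x
    by (simp add: refl_def Bf_def linear_diff[OF linL] linear_cmul[OF linL])
  define x0 where "x0 = Bi (L (coroot a))"
  have Ltx0: "x0 = - Ci (coroot a)"
  proof -
    have "x0 - L x0 = L (coroot a)" using BBi by (simp add: x0_def Bf_def)
    then have "Lt (x0 - L x0) = coroot a" by (simp add: LtL)
    then have "Lt x0 - x0 = coroot a" by (simp add: linear_diff[OF linLt] LtL)
    then have "C (- x0) = coroot a" by (simp add: C_def linear_neg[OF linLt] algebra_simps)
    then have "Ci (C (-x0)) = Ci (coroot a)" by simp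
    then have "- x0 = Ci (coroot a)" using injC by (simp add: Ci_def inv_f_f)
    then show ?thesis by (metis minus_minus)
  qed
  have ax0: "a \<bullet> x0 = -1" using ac by (simp add: Ltx0)
  have x0nz: "x0 \<noteq> 0" using ax0 by auto
  have "{x. x - L (refl a x) = 0} = span {x0}"
  proof (intro set_eqI iffI)
    fix x assume "x \<in> {x. x - L (refl a x) = 0}"
    then have "Bf x = - (a \<bullet> x) *\<^sub>R L (coroot a)" using M[of x] by (simp add: eq_neg_iff_add_eq_0)
    then have "Bi (Bf x) = - (a \<bullet> x) *\<^sub>R x0" by (simp add: x0_def linear_cmul[OF linBi] linear_neg[OF linBi])
    moreover have "Bi (Bf x) = x" unfolding Bi_def by (rule inv_f_f[OF bij_is_inj[OF Bb]])
    ultimately have xe: "x = (- (a \<bullet> x)) *\<^sub>R x0" by simp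
    have "(- (a \<bullet> x)) *\<^sub>R x0 \<in> span {x0}" by (intro span_scale span_base) simp
    then show "x \<in> span {x0}" using xe by simp
  next
    fix x assume "x \<in> span {x0}"
    then obtain k where k: "x = k *\<^sub>R x0" by (auto simp: span_singleton)
    have "Bf x0 = L (coroot a)" using BBi x0_def by simp
    then have "x0 - L (refl a x0) = 0" using M[of x0] ax0 by simp
    then show "x \<in> {x. x - L (refl a x) = 0}"
      using M[of x0] M[of x] k by (simp add: linear_cmul[OF linB] ax0 \<open>Bf x0 = L (coroot a)\<close>)
  qed
  then show "dim {x. x - L (refl a x) = 0} = 1" using x0nz by simp
  have nLc: "n \<bullet> L (coroot a) = -1"
  proof -
    have e1: "n \<bullet> L (coroot a) = Lt n \<bullet> coroot a" using adj by (simp add: inner_commute)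
    have e2: "Lt n = n - a" using CCi[of a] by (simp add: n_def' C_def algebra_simps)
    show ?thesis using e1 e2 nc ac2 by (simp add: inner_diff_left inner_diff_right inner_commute)
  qed
  have nB: "n \<bullet> Bf x = a \<bullet> x" for x
  proof -
    have e1: "n \<bullet> Bf x = n \<bullet> x - Lt n \<bullet> x" using adj[of x n] by (simp add: Bf_def inner_diff_right inner_commute)
    have e2: "Lt n = n - a" using CCi[of a] by (simp add: n_def' C_def algebra_simps)
    show ?thesis using e1 e2 by (simp add: inner_diff_left)
  qed
  show "range (\<lambda>x. x - L (refl a x)) = {z. n \<bullet> z = 0}"
  proof (intro set_eqI iffI)
    fix z assume "z \<in> range (\<lambda>x. x - L (refl a x))"
    then obtain x where "z = x - L (refl a x)" by auto
    then show "z \<in> {z. n \<bullet> z = 0}" using M[of x] nB[of x] nLc by (simp add: inner_add_right)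
  next
    fix z assume "z \<in> {z. n \<bullet> z = 0}"
    then have "a \<bullet> Bi z = 0" using BiCi[of a z] n_def' by (simp add: inner_commute)
    then have "Bi z - L (refl a (Bi z)) = z" using M[of "Bi z"] BBi by simp
    then show "z \<in> range (\<lambda>x. x - L (refl a x))"
      using range_eqI[of z "\<lambda>x. x - L (refl a x)" "Bi z"] by simp
  qed
qed

theorem lemma3p2:
  fixes R :: "'a::euclidean_space set" and \<alpha> :: "nat \<Rightarrow> 'a"
    and l :: nat and w :: "'a \<Rightarrow> 'a" and i :: nat
  assumes "root_system R" and "irreducible_rs R"
    and "l = DIM('a)"
    and "simple_roots R \<alpha> l"
    and "highest_root R \<alpha> l (- \<alpha> 0)"
    and "w \<in> affW \<alpha> l" and "regular w"
    and "i \<le> l"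
  defines "\<sigma> \<equiv> w \<circ> aff_s \<alpha> i"
  shows "dim {x. x - lin_part \<sigma> x = 0} = 1
    \<and> affine_hyperplane (range (\<lambda>x. x - \<sigma> x))
    \<and> Vwi \<alpha> l w i = Vwi \<alpha> l \<sigma> i
    \<and> Vwi \<alpha> l \<sigma> i \<subseteq> range (\<lambda>x. x - \<sigma> x)
    \<and> (\<exists>b. range (\<lambda>x. x - \<sigma> x) = {y. nwi \<alpha> w i \<bullet> y = b})
    \<and> nwi \<alpha> w i \<bullet> coroot (\<alpha> i) = 1"
proof -
  have R0: "0 \<notin> R" using assms(1) by (simp add: root_system_def)
  have anz: "\<alpha> i \<noteq> 0"
  proof (cases "i = 0")
    case True
    have "- \<alpha> 0 \<in> R" using assms(5) by (simp add: highest_root_def)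
    then show ?thesis using True R0 by force
  next
    case False
    then have "\<alpha> i \<in> R" using assms(4,8) by (auto simp: simple_roots_def)
    then show ?thesis using R0 by force
  qed
  obtain L where L: "orthogonal_transformation L" "\<And>x. w x = L x + w 0"
    using affW_struct[OF assms(6)] by blast
  have linL: "linear L" using L orthogonal_transformation_linear by blast
  have lpw: "lin_part w = L"
  proof
    fix x show "lin_part w x = L x" unfolding lin_part_def using L(2)[of x] by simp
  qed
  have B: "bij (\<lambda>x. x - L x)" using assms(7) by (simp add: regular_def lpw)
  define n where "n = inv (\<lambda>x. x - inv L x) (\<alpha> i)"
  have nw: "nwi \<alpha> w i = n" by (simp add: nwi_def lpw n_def)
  note Hlin = main_lin[OF L(1) anz B, folded n_def]
  define d where "d = (if i = 0 then 1 else 0) *\<^sub>R coroot (\<alpha> i)"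
  have sig: "\<sigma> x = L (refl (\<alpha> i) x) + \<sigma> 0" for x
  proof -
    have e1: "\<sigma> x = L (aff_s \<alpha> i x) + w 0" using L(2)[of "aff_s \<alpha> i x"] by (simp add: \<sigma>_def)
    have e2: "\<sigma> 0 = L (aff_s \<alpha> i 0) + w 0" using L(2)[of "aff_s \<alpha> i 0"] by (simp add: \<sigma>_def)
    show ?thesis unfolding e1 e2 by (simp add: aff_s_eq linear_diff[OF linL] linear_neg[OF linL] linear_0[OF linL] refl_def)
  qed
  have lps: "x - lin_part \<sigma> x = x - L (refl (\<alpha> i) x)" for x
    using sig[of x] by (simp add: lin_part_def)
  have rng: "range (\<lambda>x. x - \<sigma> x) = {y. n \<bullet> y = - (n \<bullet> \<sigma> 0)}"
  proof (intro set_eqI iffI)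
    fix y assume "y \<in> range (\<lambda>x. x - \<sigma> x)"
    then obtain x where x: "y = x - \<sigma> x" by auto
    have "x - L (refl (\<alpha> i) x) \<in> {z. n \<bullet> z = 0}" using Hlin(2) by blast
    then have h0: "n \<bullet> (x - L (refl (\<alpha> i) x)) = 0" by simp
    have "y = (x - L (refl (\<alpha> i) x)) - \<sigma> 0" using x sig[of x] by (simp add: algebra_simps)
    then have "n \<bullet> y = n \<bullet> (x - L (refl (\<alpha> i) x)) - n \<bullet> \<sigma> 0" by (simp only: inner_diff_right)
    then show "y \<in> {y. n \<bullet> y = - (n \<bullet> \<sigma> 0)}" using h0 by simp
  next
    fix y assume "y \<in> {y. n \<bullet> y = - (n \<bullet> \<sigma> 0)}"
    then have "y + \<sigma> 0 \<in> {z. n \<bullet> z = 0}" by (simp add: inner_add_right)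
    then obtain x where "y + \<sigma> 0 = x - L (refl (\<alpha> i) x)" using Hlin(2) by blast
    then have "y = x - \<sigma> x" using sig[of x] by (simp add: algebra_simps)
    then show "y \<in> range (\<lambda>x. x - \<sigma> x)" by auto
  qed
  have nnz: "n \<noteq> 0" using Hlin(3) by auto
  have V: "Vwi \<alpha> l w i = Vwi \<alpha> l \<sigma> i"
    unfolding Vwi_def
  proof (rule image_cong[OF refl])
    fix x assume "x \<in> alcove_face \<alpha> l i"
    then have "aff_s \<alpha> i x = x" by (simp add: alcove_face_def aff_s_def)
    then show "x - w x = x - \<sigma> x" by (simp add: \<sigma>_def)
  qed
  have sub: "Vwi \<alpha> l \<sigma> i \<subseteq> range (\<lambda>x. x - \<sigma> x)" by (auto simp: Vwi_def)
  show ?thesis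
    using Hlin(1) Hlin(3) rng nnz V sub
    by (auto simp: lps nw affine_hyperplane_def)
qed

end
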